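(* Let $l<u$ be real, let $\Delta Q$ be real with $0<\Delta Q\le u-l$, and let $\epsilon\ge0$, $0\le\delta<1$. Then for every $b>0$, $\frac{\partial \Delta C(b)}{\partial b}\le 0$, with equality if and only if $\Delta Q=u-l$. Consequently, at every $b>0$ with $\epsilon-\log\Delta C(b)-\log(1-\delta)\ne0$, $f$ is differentiable with $f'(b)\le 0$, and $f'(b)=0$ if and only if $\Delta Q=u-l$.
   Context: For $b>0$ and $p\in[l,u]$, $C_p(b)= 1-\frac12\left(e^{-\frac{p-l}{b}}+e^{-\frac{u-p}{b}}\right)$ (the integral $\int_l^u\frac{1}{2b}e^{-|x-p|/b}dx$), and $\Delta C(b)=\frac{C_{l+\Delta Q}(b)}{C_l(b)}$. The map $f$ is defined for $b>0$ with $\epsilon-\log\Delta C(b)-\log(1-\delta)\neq 0$ by $f(b)=\frac{\Delta Q}{\epsilon-\log\Delta C(b)-\log(1-\delta)}$. *)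

theory Defs
  imports Complex_Main
begin

text \<open>C_p(b) = 1 - (exp(-(p-l)/b) + exp(-(u-p)/b))/2, the Laplace(p,b) mass of [l,u].\<close>
definition Cp :: "real \<Rightarrow> real \<Rightarrow> real \<Rightarrow> real \<Rightarrow> real" where
  "Cp l u p b = 1 - (exp (- (p - l) / b) + exp (- (u - p) / b)) / 2"

definition DeltaC :: "real \<Rightarrow> real \<Rightarrow> real \<Rightarrow> real \<Rightarrow> real" where
  "DeltaC l u dQ b = Cp l u (l + dQ) b / Cp l u l b"

definition fmap :: "real \<Rightarrow> real \<Rightarrow> real \<Rightarrow> real \<Rightarrow> real \<Rightarrow> real \<Rightarrow> real" where
  "fmap l u dQ eps delta b = dQ / (eps - ln (DeltaC l u dQ b) - ln (1 - delta))"

end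

theory Submission
  imports Defs
begin


lemma dexp: assumes "b > 0" shows "((\<lambda>b. exp (-a/b)) has_real_derivative exp(-a/b)*(a/b^2)) (at b)"
  using assms by (auto intro!: derivative_eq_intros simp: power2_eq_square field_simps)

lemma key:
  fixes d c b :: real
  assumes b: "b > 0" and d: "d > 0" and c: "c \<ge> 0"
  defines "A \<equiv> exp(-d/b)" and "B \<equiv> exp(-c/b)"
  shows "((\<lambda>b. (2 - exp(-d/b) - exp(-c/b)) / (1 - exp(-d/b)*exp(-c/b))) has_real_derivative
     -(d*A*(1-B)^2 + c*B*(1-A)^2) / (b^2 * (1 - A*B)^2)) (at b)"
proof -
  have A1: "A < 1" "A > 0" using b d by (auto simp: A_def)
  have B1: "B \<le> 1" "B > 0" using b c by (auto simp: B_def)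
  have M: "1 - A*B > 0" using A1 B1 by (smt (verit) mult_left_le mult_pos_pos)
  have "((\<lambda>b. (2 - exp(-d/b) - exp(-c/b)) / (1 - exp(-d/b)*exp(-c/b))) has_real_derivative
     ((- (A*(d/b^2)) - B*(c/b^2)) * (1 - A*B) - (2 - A - B) * (- (A*(d/b^2)*B + A*(B*(c/b^2))))) / (1 - A*B)^2) (at b)"
    unfolding A_def B_def
    apply (rule DERIV_divide[THEN DERIV_cong])
    apply (rule DERIV_diff DERIV_const dexp[OF b] DERIV_mult)+
    using M by (auto simp: A_def B_def power2_eq_square)
  moreover have "((- (A*(d/b^2)) - B*(c/b^2)) * (1 - A*B) - (2 - A - B) * (- (A*(d/b^2)*B + A*(B*(c/b^2))))) / (1 - A*B)^2
     = -(d*A*(1-B)^2 + c*B*(1-A)^2) / (b^2 * (1 - A*B)^2)"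
  proof -
    have e1: "((- (A*(d/b^2)) - B*(c/b^2)) * (1 - A*B) - (2 - A - B) * (- (A*(d/b^2)*B + A*(B*(c/b^2)))))
       = ((- (A*d) - B*c) * (1 - A*B) + (2 - A - B) * (A*d*B + A*B*c)) / b^2"
      using b by (simp add: field_simps)
    have e2: "(- (A*d) - B*c) * (1 - A*B) + (2 - A - B) * (A*d*B + A*B*c) = -(d*A*(1-B)^2 + c*B*(1-A)^2)"
      by (simp add: power2_eq_square algebra_simps)
    show ?thesis unfolding e1 e2 by simp
  qed
  ultimately show ?thesis by simp
qed

lemma halfrat: "(1 - (X+Y)/2)/(1-(1+Z)/2) = ((2-X-Y)/(1-Z)::real)"
proof -
  have "(1 - (X+Y)/2) = (2-X-Y)/2" "(1-(1+Z)/2) = (1-Z)/2" by (simp_all add: field_simps)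
  thus ?thesis by (simp only: divide_divide_eq_left)
qed

theorem lemma4p2:
  fixes l u dQ eps delta :: real
  assumes "l < u" and "0 < dQ" and "dQ \<le> u - l"
    and "0 \<le> eps" and "0 \<le> delta" and "delta < 1"
  shows "(\<forall>b>0. \<exists>D. (DeltaC l u dQ has_real_derivative D) (at b) \<and> D \<le> 0
                    \<and> (D = 0 \<longleftrightarrow> dQ = u - l))
       \<and> (\<forall>b>0. eps - ln (DeltaC l u dQ b) - ln (1 - delta) \<noteq> 0 \<longrightarrow>
              (\<exists>D. (fmap l u dQ eps delta has_real_derivative D) (at b) \<and> D \<le> 0
                    \<and> (D = 0 \<longleftrightarrow> dQ = u - l)))"
proof -
  define c where "c = u - l - dQ"
  have c0: "c \<ge> 0" using assms by (simp add: c_def)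
  have eqf: "DeltaC l u dQ = (\<lambda>b. (2 - exp(-dQ/b) - exp(-c/b)) / (1 - exp(-dQ/b)*exp(-c/b)))"
  proof
    fix b
    have e: "exp(-dQ/b)*exp(-c/b) = exp (-(u-l)/b)" unfolding c_def
      by (simp add: exp_add[symmetric] add_divide_distrib[symmetric] diff_divide_distrib[symmetric])
    have h1: "Cp l u (l+dQ) b = 1 - (exp(-dQ/b)+exp(-c/b))/2" unfolding Cp_def c_def by simp
    have h2: "Cp l u l b = 1 - (1 + exp(-dQ/b)*exp(-c/b))/2" unfolding Cp_def e by simp
    show "DeltaC l u dQ b = (2 - exp(-dQ/b) - exp(-c/b)) / (1 - exp(-dQ/b)*exp(-c/b))"
      unfolding DeltaC_def h1 h2 by (rule halfrat)
  qed
  have part1: "\<exists>D. (DeltaC l u dQ has_real_derivative D) (at b) \<and> D \<le> 0 \<and> (D = 0 \<longleftrightarrow> dQ = u - l)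
     \<and> (D = 0 \<longleftrightarrow> dQ = u - l) \<and> DeltaC l u dQ b > 0" if b: "b > 0" for b
  proof -
    define A where "A = exp(-dQ/b)"
    define B where "B = exp(-c/b)"
    have A1: "A < 1" "A > 0" using b assms by (auto simp: A_def)
    have B1: "B \<le> 1" "B > 0" using b c0 by (auto simp: B_def)
    have M: "1 - A*B > 0" using A1 B1 by (smt (verit) mult_left_le mult_pos_pos)
    define D where "D = -(dQ*A*(1-B)^2 + c*B*(1-A)^2) / (b^2 * (1 - A*B)^2)"
    have der: "(DeltaC l u dQ has_real_derivative D) (at b)"
      unfolding eqf D_def A_def B_def using key[OF b assms(2) c0] by simp
    have num: "dQ*A*(1-B)^2 + c*B*(1-A)^2 \<ge> 0" using A1 B1 c0 assms(2) by simp
    have den: "b^2 * (1 - A*B)^2 > 0" using b M by simp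
    have Dle: "D \<le> 0" unfolding D_def using num den by (simp add: divide_nonpos_pos)
    have Deq: "D = 0 \<longleftrightarrow> dQ = u - l"
    proof
      assume "D = 0"
      hence "dQ*A*(1-B)^2 + c*B*(1-A)^2 = 0" unfolding D_def using den
        by (metis divide_eq_0_iff neg_equal_0_iff_equal order_less_irrefl)
      moreover have "dQ*A*(1-B)^2 \<ge> 0" "c*B*(1-A)^2 \<ge> 0" using A1 B1 c0 assms(2) by auto
      ultimately have "c*B*(1-A)^2 = 0" by linarith
      hence "c = 0" using A1 B1 by simp
      thus "dQ = u - l" by (simp add: c_def)
    next
      assume "dQ = u - l"
      hence "c = 0" by (simp add: c_def)
      hence "B = 1" by (simp add: B_def)
      thus "D = 0" by (simp add: D_def \<open>c = 0\<close>)
    qed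
    have "(2 - A - B) / (1 - A*B) > 0" using A1 B1 M by (intro divide_pos_pos) auto
    hence pos: "DeltaC l u dQ b > 0" unfolding eqf A_def B_def by simp
    show ?thesis using der Dle Deq pos by blast
  qed
  show ?thesis
  proof (intro conjI allI impI)
    fix b :: real assume "b > 0"
    thus "\<exists>D. (DeltaC l u dQ has_real_derivative D) (at b) \<and> D \<le> 0 \<and> (D = 0 \<longleftrightarrow> dQ = u - l)"
      using part1 by blast
  next
    fix b :: real assume b: "b > 0" and g0: "eps - ln (DeltaC l u dQ b) - ln (1 - delta) \<noteq> 0"
    obtain D where der: "(DeltaC l u dQ has_real_derivative D) (at b)" and Dle: "D \<le> 0"
      and Deq: "D = 0 \<longleftrightarrow> dQ = u - l" and pos: "DeltaC l u dQ b > 0" using part1[OF b] by blast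
    define g where "g = eps - ln (DeltaC l u dQ b) - ln (1 - delta)"
    have lnder: "((\<lambda>b. ln (DeltaC l u dQ b)) has_real_derivative 1 / DeltaC l u dQ b * D) (at b)"
      by (rule DERIV_chain2[OF DERIV_ln_divide[OF pos] der])
    have gder: "((\<lambda>b. eps - ln (DeltaC l u dQ b) - ln (1 - delta)) has_real_derivative 0 - 1 / DeltaC l u dQ b * D - 0) (at b)"
      by (intro DERIV_diff DERIV_const lnder)
    have fder: "(fmap l u dQ eps delta has_real_derivative
        (0 * g - dQ * (0 - 1 / DeltaC l u dQ b * D - 0)) / (g * g)) (at b)"
      unfolding fmap_def[abs_def] g_def
      by (rule DERIV_divide[OF DERIV_const gder g0])
    have gg: "g * g > 0" using g0 unfolding g_def[symmetric] by (simp add: zero_less_mult_iff) linarith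
    define E where "E = (0 * g - dQ * (0 - 1 / DeltaC l u dQ b * D - 0)) / (g * g)"
    have E': "E = dQ * D / (DeltaC l u dQ b * (g*g))" unfolding E_def by simp
    have "E \<le> 0" unfolding E' using assms(2) Dle pos gg
      by (simp add: divide_nonpos_pos mult_nonneg_nonpos)
    moreover have "E = 0 \<longleftrightarrow> dQ = u - l" unfolding E' using assms(2) pos gg Deq by auto
    ultimately show "\<exists>D. (fmap l u dQ eps delta has_real_derivative D) (at b) \<and> D \<le> 0 \<and> (D = 0 \<longleftrightarrow> dQ = u - l)"
      using fder unfolding E_def[symmetric] by blast
  qed
qed

end
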